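(* If $G_1$ and $G_2$ are topological Abelian groups with property $\mathfrak{h}$, then $G_1\times G_2$ has property $\mathfrak{h}$. Consequently the class of topological Abelian groups with property $\mathfrak{h}$ is closed under finite products.
   Context: $\mathbb{T}$ is the circle group. A subgroup $N$ of a topological Abelian group $G$ is $h$-embedded in $G$ if every group homomorphism $N\to\mathbb{T}$ extends to a continuous homomorphism $G\to\mathbb{T}$. $G$ has property $\mathfrak{h}$ if every countable subgroup of $G$ is $h$-embedded in $G$. *)

theory Defs
  imports "HOL-Analysis.Analysis"
begin

text \<open>The circle group is modelled as the unit circle in the complex plane under
multiplication. A subgroup of an abelian group is a set containing 0, closed under
addition and negation.\<close>

definition ab_subgroup :: "'a::ab_group_add set \<Rightarrow> bool" where
  "ab_subgroup N \<longleftrightarrow> 0 \<in> N \<and> (\<forall>x\<in>N. \<forall>y\<in>N. x + y \<in> N) \<and> (\<forall>x\<in>N. - x \<in> N)"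

text \<open>A (not necessarily continuous) group homomorphism from N into the circle group.\<close>
definition circle_hom_on :: "'a::ab_group_add set \<Rightarrow> ('a \<Rightarrow> complex) \<Rightarrow> bool" where
  "circle_hom_on N f \<longleftrightarrow> (\<forall>x\<in>N. f x \<in> sphere 0 1) \<and> (\<forall>x\<in>N. \<forall>y\<in>N. f (x + y) = f x * f y)"

definition h_embedded :: "'a::{topological_space, ab_group_add} set \<Rightarrow> bool" where
  "h_embedded N \<longleftrightarrow> (\<forall>f. circle_hom_on N f \<longrightarrow>
      (\<exists>g. circle_hom_on UNIV g \<and> continuous_on UNIV g \<and> (\<forall>x\<in>N. g x = f x)))"

definition property_h :: "'a::{topological_space, ab_group_add} itself \<Rightarrow> bool" where
  "property_h _ \<longleftrightarrow> (\<forall>N::'a set. ab_subgroup N \<and> countable N \<longrightarrow> h_embedded N)"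

end

theory Submission
  imports Defs
begin

lemma sph: "(z::complex) \<in> sphere 0 1 \<longleftrightarrow> norm z = 1" by simp

theorem proposition2p4:
  assumes "property_h TYPE('a::topological_ab_group_add)"
      and "property_h TYPE('b::topological_ab_group_add)"
  shows "property_h TYPE('a \<times> 'b)"
  unfolding property_h_def h_embedded_def
proof (intro allI impI, elim conjE)
  fix N :: "('a \<times> 'b) set" and f
  assume NS: "ab_subgroup N" and NC: "countable N" and fh: "circle_hom_on N f"
  have N0: "0 \<in> N" and Nadd: "\<And>p q. p \<in> N \<Longrightarrow> q \<in> N \<Longrightarrow> p + q \<in> N"
    and Nneg: "\<And>p. p \<in> N \<Longrightarrow> -p \<in> N" using NS unfolding ab_subgroup_def by auto
  have fn: "\<And>p. p \<in> N \<Longrightarrow> norm (f p) = 1"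
    and fm: "\<And>p q. p \<in> N \<Longrightarrow> q \<in> N \<Longrightarrow> f (p + q) = f p * f q"
    using fh unfolding circle_hom_on_def by auto
  define A where "A = {a::'a. (a,0::'b) \<in> N}"
  have AS: "ab_subgroup A" unfolding ab_subgroup_def A_def
  proof (intro conjI ballI; simp)
    show "(0, 0) \<in> N" using N0 by (simp add: zero_prod_def)
    show "\<And>x y. (x, 0) \<in> N \<Longrightarrow> (y, 0) \<in> N \<Longrightarrow> (x + y, 0) \<in> N"
      using Nadd by fastforce
    show "\<And>x. (x, 0) \<in> N \<Longrightarrow> (- x, 0) \<in> N" using Nneg by fastforce
  qed
  have AC: "countable A"
    by (rule countable_subset[of _ "fst ` N"]) (auto simp: A_def intro: countable_image NC image_eqI[where x="(_,0)"])
  have "circle_hom_on A (\<lambda>a. f (a,0))" unfolding circle_hom_on_def A_def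
    using fn fm by (auto simp: sph) (metis add_0 add_Pair)
  then obtain g1 where g1h: "circle_hom_on UNIV g1" and g1c: "continuous_on UNIV g1"
    and g1e: "\<And>a. a \<in> A \<Longrightarrow> g1 a = f (a,0)"
    using assms(1) AS AC unfolding property_h_def h_embedded_def by blast
  have g1n: "\<And>x. norm (g1 x) = 1" and g1m: "\<And>x y. g1 (x+y) = g1 x * g1 y"
    using g1h unfolding circle_hom_on_def by auto
  have g1nz: "\<And>x. g1 x \<noteq> 0" using g1n by (metis norm_zero zero_neq_one)
  have key: "f (x,y) / g1 x = f (x',y) / g1 x'" if "(x,y) \<in> N" "(x',y) \<in> N" for x x' y
  proof -
    have dN: "(x - x', 0) \<in> N" using Nadd[OF that(1) Nneg[OF that(2)]] by simp
    have "(x,y) = (x',y) + (x - x', 0)" by simp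
    then have "f (x,y) = f (x',y) * f (x - x', 0)" using fm[OF that(2) dN] by simp
    also have "f (x - x', 0) = g1 (x - x')" using g1e dN A_def by simp
    finally have 1: "f (x,y) = f (x',y) * g1 (x - x')" .
    have "g1 x = g1 x' * g1 (x - x')" using g1m[of x' "x - x'"] by simp
    with 1 show ?thesis using g1nz by (simp add: field_simps)
  qed
  define B where "B = snd ` N"
  have BS: "ab_subgroup B" unfolding ab_subgroup_def B_def
  proof (intro conjI ballI)
    show "0 \<in> snd ` N" using N0 by (metis image_eqI snd_zero)
  next
    fix y y' assume "y \<in> snd ` N" "y' \<in> snd ` N"
    then obtain p q where "p \<in> N" "q \<in> N" "y = snd p" "y' = snd q" by auto
    then show "y + y' \<in> snd ` N" using Nadd by (metis image_eqI snd_add)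
  next
    fix y assume "y \<in> snd ` N"
    then obtain p where "p \<in> N" "y = snd p" by auto
    then show "- y \<in> snd ` N" using Nneg by (metis image_eqI snd_uminus)
  qed
  have BC: "countable B" unfolding B_def using NC by simp
  define h2 where "h2 y = f (SOME x. (x,y) \<in> N, y) / g1 (SOME x. (x,y) \<in> N)" for y
  have h2e: "h2 y = f (x,y) / g1 x" if "(x,y) \<in> N" for x y
  proof -
    have "(SOME x. (x,y) \<in> N, y) \<in> N" using that by (rule someI)
    then show ?thesis unfolding h2_def using key that by blast
  qed
  have "circle_hom_on B h2" unfolding circle_hom_on_def B_def
  proof (intro conjI ballI)
    fix y assume "y \<in> snd ` N"
    then obtain x where xy: "(x,y) \<in> N" by force
    show "h2 y \<in> sphere 0 1" using h2e[OF xy] fn[OF xy] g1n by (simp add: norm_divide)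
  next
    fix y y' assume "y \<in> snd ` N" "y' \<in> snd ` N"
    then obtain x x' where xy: "(x,y) \<in> N" and xy': "(x',y') \<in> N" by force
    have s: "(x+x', y+y') \<in> N" using Nadd[OF xy xy'] by simp
    have "f (x+x', y+y') = f (x,y) * f (x',y')" using fm[OF xy xy'] by simp
    then show "h2 (y + y') = h2 y * h2 y'"
      using h2e[OF s] h2e[OF xy] h2e[OF xy'] g1m[of x x'] by simp
  qed
  then obtain g2 where g2h: "circle_hom_on UNIV g2" and g2c: "continuous_on UNIV g2"
    and g2e: "\<And>y. y \<in> B \<Longrightarrow> g2 y = h2 y"
    using assms(2) BS BC unfolding property_h_def h_embedded_def by blast
  have g2n: "\<And>x. norm (g2 x) = 1" and g2m: "\<And>x y. g2 (x+y) = g2 x * g2 y"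
    using g2h unfolding circle_hom_on_def by auto
  show "\<exists>g. circle_hom_on UNIV g \<and> continuous_on UNIV g \<and> (\<forall>x\<in>N. g x = f x)"
  proof (intro exI conjI ballI)
    let ?g = "\<lambda>p::'a\<times>'b. g1 (fst p) * g2 (snd p)"
    show "circle_hom_on UNIV ?g" unfolding circle_hom_on_def
      by (simp add: norm_mult g1n g2n g1m g2m)
    show "continuous_on UNIV ?g"
      by (intro continuous_on_mult continuous_on_compose2[OF g1c] continuous_on_compose2[OF g2c]
          continuous_on_fst continuous_on_snd continuous_on_id) auto
  next
    fix p assume pN: "p \<in> N"
    obtain x y where p: "p = (x,y)" by force
    have "y \<in> B" using pN p B_def by force
    then show "g1 (fst p) * g2 (snd p) = f p"
      using g2e h2e pN p g1nz by simp
  qed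
qed

end
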